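(* Let $(X,Y)$ be a pair of racks which is productive and synchronized. Then the natural group homomorphism $\Gamma_{X\times Y}\to\Gamma_X\times\Gamma_Y\times\Gamma_{X_{\mathrm{triv}}\times Y_{\mathrm{triv}}}$ is injective.
   Context: A rack is a set $X$ with an operation $x^y$ such that $x\mapsto x^y$ is bijective for each $y$ and $(z^x)^y=(z^y)^{x^y}$. The product rack has $(x,a)^{(y,b)}=(x^y,a^b)$. The structure group is $\Gamma_X=\langle X\mid y^{-1}xy=x^y\rangle$, functorial; $\Gamma'$ denotes commutator subgroup. $X_{\mathrm{triv}}$ is the set of connected components of $X$ (classes of the smallest equivalence relation with $x\sim x^y$), regarded as a trivial rack ($a^b=a$), with the quotient map $X\to X_{\mathrm{triv}}$ a rack morphism; $\Gamma$ of a trivial rack is the free abelian group on it. The pair $(X,Y)$ is productive if the homomorphism $\Gamma'_{X\times Y}\to\Gamma'_X\times\Gamma'_Y$ induced by $\Gamma_{X\times Y}\to\Gamma_X\times\Gamma_Y$ is injective, and synchronized if the natural surjection $(X\times Y)_{\mathrm{triv}}\to X_{\mathrm{triv}}\times Y_{\mathrm{triv}}$ is a bijection. The map to $\Gamma_{X_{\mathrm{triv}}\times Y_{\mathrm{triv}}}$ is induced by $(x,y)\mapsto$(component of $x$, component of $y$). *)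

theory Defs
  imports "HOL-Algebra.Generated_Groups"
begin

text \<open>A rack is a carrier set X with a binary operation opr, where opr x y stands for x^y.\<close>

definition rack :: "'a set \<Rightarrow> ('a \<Rightarrow> 'a \<Rightarrow> 'a) \<Rightarrow> bool" where
  "rack X opr \<longleftrightarrow>
     (\<forall>x\<in>X. \<forall>y\<in>X. opr x y \<in> X) \<and>
     (\<forall>y\<in>X. bij_betw (\<lambda>x. opr x y) X X) \<and>
     (\<forall>x\<in>X. \<forall>y\<in>X. \<forall>z\<in>X. opr (opr z x) y = opr (opr z y) (opr x y))"

definition prod_op :: "('a \<Rightarrow> 'a \<Rightarrow> 'a) \<Rightarrow> ('b \<Rightarrow> 'b \<Rightarrow> 'b) \<Rightarrow> ('a \<times> 'b) \<Rightarrow> ('a \<times> 'b) \<Rightarrow> 'a \<times> 'b" where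
  "prod_op opX opY p q = (opX (fst p) (fst q), opY (snd p) (snd q))"

inductive_set conn :: "'a set \<Rightarrow> ('a \<Rightarrow> 'a \<Rightarrow> 'a) \<Rightarrow> ('a \<times> 'a) set"
  for X opr where
  conn_refl: "x \<in> X \<Longrightarrow> (x, x) \<in> conn X opr"
| conn_step: "x \<in> X \<Longrightarrow> y \<in> X \<Longrightarrow> (x, opr x y) \<in> conn X opr"
| conn_sym: "(x, y) \<in> conn X opr \<Longrightarrow> (y, x) \<in> conn X opr"
| conn_trans: "(x, y) \<in> conn X opr \<Longrightarrow> (y, z) \<in> conn X opr \<Longrightarrow> (x, z) \<in> conn X opr"

text \<open>X_triv as a set: the set of connected components.\<close>
definition triv_set :: "'a set \<Rightarrow> ('a \<Rightarrow> 'a \<Rightarrow> 'a) \<Rightarrow> 'a set set" where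
  "triv_set X opr = X // conn X opr"

definition component :: "'a set \<Rightarrow> ('a \<Rightarrow> 'a \<Rightarrow> 'a) \<Rightarrow> 'a \<Rightarrow> 'a set" where
  "component X opr x = conn X opr `` {x}"

definition triv_op :: "'c \<Rightarrow> 'c \<Rightarrow> 'c" where
  "triv_op a b = a"

text \<open>Words in the free group on X: letters (x, True) stand for x, (x, False) for x^-1.
  The relation below is the congruence on words generated by free cancellation and the
  defining relations y^-1 x y = x^y; the structure group is the quotient.\<close>

inductive_set wrel :: "'a set \<Rightarrow> ('a \<Rightarrow> 'a \<Rightarrow> 'a) \<Rightarrow> (('a \<times> bool) list \<times> ('a \<times> bool) list) set"
  for X opr where
  wrel_refl: "set (map fst w) \<subseteq> X \<Longrightarrow> (w, w) \<in> wrel X opr"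
| wrel_sym: "(u, v) \<in> wrel X opr \<Longrightarrow> (v, u) \<in> wrel X opr"
| wrel_trans: "(u, v) \<in> wrel X opr \<Longrightarrow> (v, w) \<in> wrel X opr \<Longrightarrow> (u, w) \<in> wrel X opr"
| wrel_cancel: "set (map fst u) \<subseteq> X \<Longrightarrow> set (map fst v) \<subseteq> X \<Longrightarrow> x \<in> X \<Longrightarrow>
      (u @ [(x, b), (x, \<not> b)] @ v, u @ v) \<in> wrel X opr"
| wrel_rack: "set (map fst u) \<subseteq> X \<Longrightarrow> set (map fst v) \<subseteq> X \<Longrightarrow> x \<in> X \<Longrightarrow> y \<in> X \<Longrightarrow>
      (u @ [(y, False), (x, True), (y, True)] @ v, u @ [(opr x y, True)] @ v) \<in> wrel X opr"

definition words :: "'a set \<Rightarrow> ('a \<times> bool) list set" where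
  "words X = {w. set (map fst w) \<subseteq> X}"

definition structure_group :: "'a set \<Rightarrow> ('a \<Rightarrow> 'a \<Rightarrow> 'a) \<Rightarrow> ('a \<times> bool) list set monoid" where
  "structure_group X opr =
     \<lparr> carrier = words X // wrel X opr,
       mult = (\<lambda>A B. \<Union>a\<in>A. \<Union>b\<in>B. wrel X opr `` {a @ b}),
       one = wrel X opr `` {[]} \<rparr>"

definition induced_hom :: "'b set \<Rightarrow> ('b \<Rightarrow> 'b \<Rightarrow> 'b) \<Rightarrow> ('a \<Rightarrow> 'b)
    \<Rightarrow> ('a \<times> bool) list set \<Rightarrow> ('b \<times> bool) list set" where
  "induced_hom X' opr' f A = wrel X' opr' `` ((map (\<lambda>(x, b). (f x, b))) ` A)"

definition productive :: "'a set \<Rightarrow> ('a \<Rightarrow> 'a \<Rightarrow> 'a) \<Rightarrow> 'b set \<Rightarrow> ('b \<Rightarrow> 'b \<Rightarrow> 'b) \<Rightarrow> bool" where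
  "productive X opX Y opY \<longleftrightarrow>
     (let G = structure_group (X \<times> Y) (prod_op opX opY) in
      inj_on (\<lambda>A. (induced_hom X opX fst A, induced_hom Y opY snd A))
             (derived G (carrier G)))"

definition triv_prod_map :: "'a set \<Rightarrow> ('a \<Rightarrow> 'a \<Rightarrow> 'a) \<Rightarrow> 'b set \<Rightarrow> ('b \<Rightarrow> 'b \<Rightarrow> 'b)
    \<Rightarrow> ('a \<times> 'b) set \<Rightarrow> 'a set \<times> 'b set" where
  "triv_prod_map X opX Y opY C = the_elem ((\<lambda>p. (component X opX (fst p), component Y opY (snd p))) ` C)"

definition synchronized :: "'a set \<Rightarrow> ('a \<Rightarrow> 'a \<Rightarrow> 'a) \<Rightarrow> 'b set \<Rightarrow> ('b \<Rightarrow> 'b \<Rightarrow> 'b) \<Rightarrow> bool" where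
  "synchronized X opX Y opY \<longleftrightarrow>
     bij_betw (triv_prod_map X opX Y opY)
       (triv_set (X \<times> Y) (prod_op opX opY))
       (triv_set X opX \<times> triv_set Y opY)"

end

theory Submission
  imports Defs
begin

definition closed_op :: "'a set \<Rightarrow> ('a \<Rightarrow> 'a \<Rightarrow> 'a) \<Rightarrow> bool" where
  "closed_op X opr \<longleftrightarrow> (\<forall>x\<in>X. \<forall>y\<in>X. opr x y \<in> X)"

lemma wrel_words: "(u, v) \<in> wrel X opr \<Longrightarrow> closed_op X opr \<Longrightarrow> u \<in> words X \<and> v \<in> words X"
  by (induction rule: wrel.induct) (auto simp: words_def closed_op_def)

lemma wrel_refl': "w \<in> words X \<Longrightarrow> (w, w) \<in> wrel X opr"
  by (rule wrel_refl) (simp add: words_def)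

lemma wrel_equiv: "closed_op X opr \<Longrightarrow> equiv (words X) (wrel X opr)"
  unfolding equiv_def refl_on_def sym_def trans_def
proof (intro conjI allI impI ballI subsetI)
  assume c: "closed_op X opr"
  fix p assume "p \<in> wrel X opr"
  then show "p \<in> words X \<times> words X" using wrel_words[OF _ c] by (cases p) auto
qed (auto intro: wrel_refl' wrel.wrel_sym wrel.wrel_trans)

lemma wrel_cong:
  assumes "(u, v) \<in> wrel X opr" "s \<in> words X" "t \<in> words X"
  shows "(s @ u @ t, s @ v @ t) \<in> wrel X opr"
  using assms
proof (induction arbitrary: s t rule: wrel.induct)
  case (wrel_refl w)
  then show ?case by (intro wrel.wrel_refl) (auto simp: words_def)
next
  case (wrel_sym u v)
  then show ?case by (blast intro: wrel.wrel_sym)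
next
  case (wrel_trans u v w)
  then show ?case by (blast intro: wrel.wrel_trans)
next
  case (wrel_cancel u v x b)
  have "((s @ u) @ [(x, b), (x, \<not> b)] @ (v @ t), (s @ u) @ (v @ t)) \<in> wrel X opr"
    using wrel_cancel by (intro wrel.wrel_cancel) (auto simp: words_def)
  then show ?case by simp
next
  case (wrel_rack u v x y)
  have "((s @ u) @ [(y, False), (x, True), (y, True)] @ (v @ t), (s @ u) @ [(opr x y, True)] @ (v @ t)) \<in> wrel X opr"
    using wrel_rack by (intro wrel.wrel_rack) (auto simp: words_def)
  then show ?case by simp
qed

lemma wrel_cong2:
  assumes c: "closed_op X opr" and "(a, a') \<in> wrel X opr" "(b, b') \<in> wrel X opr"
  shows "(a @ b, a' @ b') \<in> wrel X opr"
proof -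
  have "(a @ b, a' @ b) \<in> wrel X opr"
    using wrel_cong[OF assms(2), of "[]" b] wrel_words[OF assms(3) c] by (simp add: words_def)
  moreover have "(a' @ b, a' @ b') \<in> wrel X opr"
    using wrel_cong[OF assms(3), of a' "[]"] wrel_words[OF assms(2) c] by (simp add: words_def)
  ultimately show ?thesis by (blast intro: wrel.wrel_trans)
qed

lemma class_eq_iff:
  "closed_op X opr \<Longrightarrow> a \<in> words X \<Longrightarrow> b \<in> words X \<Longrightarrow> (wrel X opr `` {a} = wrel X opr `` {b}) = ((a, b) \<in> wrel X opr)"
  by (rule eq_equiv_class_iff[OF wrel_equiv])

lemma class_eqI: "(a, b) \<in> wrel X opr \<Longrightarrow> wrel X opr `` {a} = wrel X opr `` {b}"
  using wrel.wrel_sym wrel.wrel_trans by blast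

lemma words_append: "a \<in> words X \<Longrightarrow> b \<in> words X \<Longrightarrow> a @ b \<in> words X"
  by (auto simp: words_def)

lemma sg_carrier: "carrier (structure_group X opr) = words X // wrel X opr"
  by (simp add: structure_group_def)

lemma sg_one: "one (structure_group X opr) = wrel X opr `` {[]}"
  by (simp add: structure_group_def)

lemma sg_mult:
  assumes c: "closed_op X opr" and "a \<in> words X" "b \<in> words X"
  shows "mult (structure_group X opr) (wrel X opr `` {a}) (wrel X opr `` {b}) = wrel X opr `` {a @ b}"
proof -
  let ?R = "wrel X opr"
  have eq: "?R `` {a' @ b'} = ?R `` {a @ b}"
    if "a' \<in> ?R `` {a}" "b' \<in> ?R `` {b}" for a' b'
    using that by (intro class_eqI wrel_cong2[OF c]) (auto intro: wrel.wrel_sym)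
  have mem: "a \<in> ?R `` {a}" "b \<in> ?R `` {b}"
    using assms(2,3) wrel_refl' by auto
  have "(\<Union>a'\<in>?R `` {a}. \<Union>b'\<in>?R `` {b}. ?R `` {a' @ b'}) = ?R `` {a @ b}"
  proof (rule equalityI)
    show "(\<Union>a'\<in>?R `` {a}. \<Union>b'\<in>?R `` {b}. ?R `` {a' @ b'}) \<subseteq> ?R `` {a @ b}"
      using eq by blast
    show "?R `` {a @ b} \<subseteq> (\<Union>a'\<in>?R `` {a}. \<Union>b'\<in>?R `` {b}. ?R `` {a' @ b'})"
      using mem by blast
  qed
  then show ?thesis
    unfolding structure_group_def by simp
qed

definition winv :: "('a \<times> bool) list \<Rightarrow> ('a \<times> bool) list" where
  "winv w = rev (map (\<lambda>(x, b). (x, \<not> b)) w)"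

lemma winv_words: "w \<in> words X \<Longrightarrow> winv w \<in> words X"
  by (auto simp: winv_def words_def)

lemma winv_cancel: "w \<in> words X \<Longrightarrow> (winv w @ w, []) \<in> wrel X opr"
proof (induction w)
  case Nil
  then show ?case by (simp add: winv_def wrel_refl')
next
  case (Cons a w)
  obtain x b where a: "a = (x, b)" by (cases a)
  have w: "w \<in> words X" "x \<in> X" using Cons.prems a by (auto simp: words_def)
  have "(winv w @ [(x, \<not> b), (x, \<not> \<not> b)] @ w, winv w @ w) \<in> wrel X opr"
    using w winv_words[OF w(1)] by (intro wrel.wrel_cancel) (auto simp: words_def)
  then have "(winv (a # w) @ (a # w), winv w @ w) \<in> wrel X opr"
    by (simp add: a winv_def)
  then show ?case using Cons.IH[OF w(1)] by (blast intro: wrel.wrel_trans)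
qed

lemma sg_group:
  assumes c: "closed_op X opr"
  shows "group (structure_group X opr)"
proof (rule groupI)
  let ?G = "structure_group X opr"
  let ?R = "wrel X opr"
  fix x y assume "x \<in> carrier ?G" "y \<in> carrier ?G"
  then obtain a b where "a \<in> words X" "b \<in> words X" "x = ?R `` {a}" "y = ?R `` {b}"
    by (auto simp: sg_carrier elim!: quotientE)
  then show "x \<otimes>\<^bsub>?G\<^esub> y \<in> carrier ?G"
    by (simp add: sg_mult[OF c] sg_carrier quotientI words_append)
next
  let ?G = "structure_group X opr"
  let ?R = "wrel X opr"
  show "\<one>\<^bsub>?G\<^esub> \<in> carrier ?G"
    by (simp add: sg_one sg_carrier quotientI words_def)
next
  let ?G = "structure_group X opr"
  let ?R = "wrel X opr"
  fix x y z assume "x \<in> carrier ?G" "y \<in> carrier ?G" "z \<in> carrier ?G"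
  then obtain a b c where "a \<in> words X" "b \<in> words X" "c \<in> words X"
     "x = ?R `` {a}" "y = ?R `` {b}" "z = ?R `` {c}"
    by (auto simp: sg_carrier elim!: quotientE)
  then show "x \<otimes>\<^bsub>?G\<^esub> y \<otimes>\<^bsub>?G\<^esub> z = x \<otimes>\<^bsub>?G\<^esub> (y \<otimes>\<^bsub>?G\<^esub> z)"
    by (simp add: sg_mult[OF c] words_append)
next
  let ?G = "structure_group X opr"
  let ?R = "wrel X opr"
  fix x assume "x \<in> carrier ?G"
  then obtain a where "a \<in> words X" "x = ?R `` {a}"
    by (auto simp: sg_carrier elim!: quotientE)
  then show "\<one>\<^bsub>?G\<^esub> \<otimes>\<^bsub>?G\<^esub> x = x"
    by (simp add: sg_mult[OF c] sg_one words_def)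
next
  let ?G = "structure_group X opr"
  let ?R = "wrel X opr"
  fix x assume "x \<in> carrier ?G"
  then obtain a where a: "a \<in> words X" "x = ?R `` {a}"
    by (auto simp: sg_carrier elim!: quotientE)
  show "\<exists>y\<in>carrier ?G. y \<otimes>\<^bsub>?G\<^esub> x = \<one>\<^bsub>?G\<^esub>"
  proof (intro bexI)
    show "?R `` {winv a} \<otimes>\<^bsub>?G\<^esub> x = \<one>\<^bsub>?G\<^esub>"
      using a winv_words[OF a(1)] winv_cancel[OF a(1)]
      by (simp add: sg_mult[OF c] sg_one class_eqI)
    show "?R `` {winv a} \<in> carrier ?G"
      using winv_words[OF a(1)] by (simp add: sg_carrier quotientI)
  qed
qed

section \<open>Induced homomorphisms\<close>

lemma map_fst_sub:
  "set (map fst u) \<subseteq> X \<Longrightarrow> f ` X \<subseteq> X' \<Longrightarrow> set (map fst (map (\<lambda>(x, b). (f x, b)) u)) \<subseteq> X'"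
  by (induction u) auto

lemma wrel_map:
  assumes "(u, v) \<in> wrel X opr" "f ` X \<subseteq> X'"
    "\<And>x y. x \<in> X \<Longrightarrow> y \<in> X \<Longrightarrow> f (opr x y) = opr' (f x) (f y)"
  shows "(map (\<lambda>(x, b). (f x, b)) u, map (\<lambda>(x, b). (f x, b)) v) \<in> wrel X' opr'"
  using assms(1)
proof (induction rule: wrel.induct)
  case (wrel_refl w)
  then show ?case using assms(2) by (intro wrel.wrel_refl map_fst_sub)
next
  case (wrel_sym u v)
  then show ?case by (blast intro: wrel.wrel_sym)
next
  case (wrel_trans u v w)
  then show ?case by (blast intro: wrel.wrel_trans)
next
  case (wrel_cancel u v x b)
  have "(map (\<lambda>(x, b). (f x, b)) u @ [(f x, b), (f x, \<not> b)] @ map (\<lambda>(x, b). (f x, b)) v,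
         map (\<lambda>(x, b). (f x, b)) u @ map (\<lambda>(x, b). (f x, b)) v) \<in> wrel X' opr'"
    using wrel_cancel assms(2) by (intro wrel.wrel_cancel map_fst_sub) auto
  then show ?case by simp
next
  case (wrel_rack u v x y)
  have "(map (\<lambda>(x, b). (f x, b)) u @ [(f y, False), (f x, True), (f y, True)] @ map (\<lambda>(x, b). (f x, b)) v,
         map (\<lambda>(x, b). (f x, b)) u @ [(opr' (f x) (f y), True)] @ map (\<lambda>(x, b). (f x, b)) v) \<in> wrel X' opr'"
    using wrel_rack assms(2) by (intro wrel.wrel_rack map_fst_sub) auto
  then show ?case using assms(3)[OF wrel_rack(3,4)] by simp
qed

lemma map_words:
  "w \<in> words X \<Longrightarrow> f ` X \<subseteq> X' \<Longrightarrow> map (\<lambda>(x, b). (f x, b)) w \<in> words X'"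
  by (force simp: words_def)

lemma induced_hom_class:
  assumes "w \<in> words X" "f ` X \<subseteq> X'"
    "\<And>x y. x \<in> X \<Longrightarrow> y \<in> X \<Longrightarrow> f (opr x y) = opr' (f x) (f y)"
  shows "induced_hom X' opr' f (wrel X opr `` {w}) = wrel X' opr' `` {map (\<lambda>(x, b). (f x, b)) w}"
proof -
  have "wrel X' opr' `` {map (\<lambda>(x, b). (f x, b)) w'} = wrel X' opr' `` {map (\<lambda>(x, b). (f x, b)) w}"
    if "w' \<in> wrel X opr `` {w}" for w'
  proof -
    have "(w', w) \<in> wrel X opr" using that by (auto intro: wrel.wrel_sym)
    then have "(map (\<lambda>(x, b). (f x, b)) w', map (\<lambda>(x, b). (f x, b)) w) \<in> wrel X' opr'"
      by (rule wrel_map[where f=f and X=X and X'=X' and opr=opr and opr'=opr', OF _ assms(2,3)])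
    then show ?thesis by (rule class_eqI)
  qed
  moreover have "w \<in> wrel X opr `` {w}" using assms(1) wrel_refl' by auto
  ultimately show ?thesis unfolding induced_hom_def by blast
qed

lemma induced_hom_hom:
  assumes c: "closed_op X opr" "closed_op X' opr'" and "f ` X \<subseteq> X'"
    "\<And>x y. x \<in> X \<Longrightarrow> y \<in> X \<Longrightarrow> f (opr x y) = opr' (f x) (f y)"
  shows "induced_hom X' opr' f \<in> hom (structure_group X opr) (structure_group X' opr')"
proof (rule homI)
  fix x assume "x \<in> carrier (structure_group X opr)"
  then obtain a where a: "a \<in> words X" "x = wrel X opr `` {a}"
    by (auto simp: sg_carrier elim!: quotientE)
  then show "induced_hom X' opr' f x \<in> carrier (structure_group X' opr')"
    using induced_hom_class[where f=f and opr=opr and opr'=opr', OF a(1) assms(3,4)] map_words[OF a(1) assms(3)]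
    by (simp add: sg_carrier quotientI)
next
  fix x y assume "x \<in> carrier (structure_group X opr)" "y \<in> carrier (structure_group X opr)"
  then obtain a b where a: "a \<in> words X" "x = wrel X opr `` {a}" "b \<in> words X" "y = wrel X opr `` {b}"
    by (auto simp: sg_carrier elim!: quotientE)
  then show "induced_hom X' opr' f (x \<otimes>\<^bsub>structure_group X opr\<^esub> y) =
    induced_hom X' opr' f x \<otimes>\<^bsub>structure_group X' opr'\<^esub> induced_hom X' opr' f y"
    using map_words[OF a(1) assms(3)] map_words[OF a(3) assms(3)]
    by (simp add: sg_mult[OF c(1)] words_append induced_hom_class[where f=f and opr=opr and opr'=opr', OF _ assms(3,4)] del: map_append)
      (simp add: sg_mult[OF c(2)])
qed


fun esum :: "('l \<Rightarrow> 'c) \<Rightarrow> 'c \<Rightarrow> ('l \<times> bool) list \<Rightarrow> int" where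
  "esum f c [] = 0"
| "esum f c ((x, b) # w) = (if f x = c then (if b then 1 else -1) else 0) + esum f c w"

fun wprod :: "('g, 'm) monoid_scheme \<Rightarrow> ('l \<Rightarrow> 'g) \<Rightarrow> ('l \<times> bool) list \<Rightarrow> 'g" where
  "wprod K h [] = \<one>\<^bsub>K\<^esub>"
| "wprod K h ((x, b) # w) = (if b then h x else inv\<^bsub>K\<^esub> (h x)) \<otimes>\<^bsub>K\<^esub> wprod K h w"

lemma esum_append: "esum f c (u @ v) = esum f c u + esum f c v"
  by (induction f c u rule: esum.induct) auto

lemma esum_sign:
  "\<not> (\<exists>v x' t. w = v @ (x', \<not> b) # t \<and> f x' = c) \<Longrightarrow>
   (if b then esum f c w \<ge> 0 else esum f c w \<le> 0)"
proof (induction w)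
  case Nil
  then show ?case by simp
next
  case (Cons a w)
  obtain y b' where a: "a = (y, b')" by (cases a)
  have nw: "\<not> (\<exists>v x' t. w = v @ (x', \<not> b) # t \<and> f x' = c)"
  proof
    assume "\<exists>v x' t. w = v @ (x', \<not> b) # t \<and> f x' = c"
    then obtain v x' t where "w = v @ (x', \<not> b) # t" "f x' = c" by blast
    then have "a # w = (a # v) @ (x', \<not> b) # t \<and> f x' = c" by simp
    then show False using Cons.prems by blast
  qed
  have "\<not> (f y = c \<and> b' = (\<not> b))"
  proof
    assume "f y = c \<and> b' = (\<not> b)"
    then have "a # w = [] @ (y, \<not> b) # w \<and> f y = c" using a by simp
    then show False using Cons.prems by blast
  qed
  then show ?case using Cons.IH[OF nw] a by (cases b; cases b') auto
qed

context group
begin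

lemma wprod_closed:
  "(\<And>x. x \<in> set (map fst w) \<Longrightarrow> h x \<in> carrier G) \<Longrightarrow> wprod G h w \<in> carrier G"
proof (induction w)
  case Nil
  then show ?case by simp
next
  case (Cons a w)
  then show ?case by (cases a) auto
qed

lemma wprod_append:
  "(\<And>x. x \<in> set (map fst (u @ v)) \<Longrightarrow> h x \<in> carrier G) \<Longrightarrow>
   wprod G h (u @ v) = wprod G h u \<otimes> wprod G h v"
proof (induction u)
  case Nil
  then show ?case using wprod_closed[of v h] by simp
next
  case (Cons a u)
  obtain x b where a: "a = (x, b)" by (cases a)
  have c: "h x \<in> carrier G" using Cons.prems a by auto
  have "wprod G h u \<in> carrier G" "wprod G h v \<in> carrier G"
    using Cons.prems by (auto intro!: wprod_closed)
  then show ?case using Cons a c by (auto simp: m_assoc)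
qed

end

lemma (in comm_group) cancel_aux:
  assumes "a \<in> carrier G" "V \<in> carrier G" "T \<in> carrier G"
  shows "a \<otimes> (V \<otimes> (inv a \<otimes> T)) = V \<otimes> T" "inv a \<otimes> (V \<otimes> (a \<otimes> T)) = V \<otimes> T"
proof -
  have "a \<otimes> (V \<otimes> (inv a \<otimes> T)) = V \<otimes> (a \<otimes> (inv a \<otimes> T))"
    using assms by (simp add: m_lcomm)
  also have "\<dots> = V \<otimes> T" using assms by (simp flip: m_assoc)
  finally show "a \<otimes> (V \<otimes> (inv a \<otimes> T)) = V \<otimes> T" .
  have "inv a \<otimes> (V \<otimes> (a \<otimes> T)) = V \<otimes> (inv a \<otimes> (a \<otimes> T))"
    using assms by (simp add: m_lcomm)
  also have "\<dots> = V \<otimes> T" using assms by (simp flip: m_assoc)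
  finally show "inv a \<otimes> (V \<otimes> (a \<otimes> T)) = V \<otimes> T" .
qed

lemma (in comm_group) wprod_zero:
  assumes hc: "\<forall>x\<in>S. h x \<in> carrier G"
    and hf: "\<forall>x\<in>S. \<forall>x'\<in>S. f x = f x' \<longrightarrow> h x = h x'"
  shows "set (map fst w) \<subseteq> S \<Longrightarrow> (\<forall>c. esum f c w = 0) \<Longrightarrow> wprod G h w = \<one>"
proof (induction "length w" arbitrary: w rule: less_induct)
  case less
  show ?case
  proof (cases w)
    case Nil
    then show ?thesis by simp
  next
    case (Cons a w')
    obtain x b where a: "a = (x, b)" by (cases a)
    have "esum f (f x) w = 0" using less.prems(2) by blast
    then have es: "esum f (f x) w' = (if b then -1 else 1)" using Cons a by auto
    have "\<exists>v x' t. w' = v @ (x', \<not> b) # t \<and> f x' = f x"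
      using esum_sign[of w' b f "f x"] es by (cases b) auto
    then obtain v x' t where sp: "w' = v @ (x', \<not> b) # t" "f x' = f x" by blast
    define w'' where "w'' = v @ t"
    have wdef: "w = (x, b) # v @ (x', \<not> b) # t" using Cons a sp by simp
    have len: "length w'' < length w" using wdef w''_def by simp
    have sub: "set (map fst w'') \<subseteq> S" using less.prems(1) wdef w''_def by auto
    have es2: "\<forall>c. esum f c w'' = 0"
    proof
      fix c
      have "esum f c w = 0" using less.prems(2) by blast
      then show "esum f c w'' = 0"
        unfolding wdef w''_def using sp(2)
        by (cases "f x = c"; cases b) (auto simp: esum_append)
    qed
    have IH: "wprod G h w'' = \<one>" using less.hyps[OF len sub es2] .
    have xS: "x \<in> S" "x' \<in> S" using less.prems(1) wdef by auto
    have hx: "h x' = h x" using hf xS sp(2) by metis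
    have hS: "\<And>y. y \<in> S \<Longrightarrow> h y \<in> carrier G" using hc by blast
    have vS: "set (map fst v) \<subseteq> S" "set (map fst t) \<subseteq> S" using less.prems(1) wdef by auto
    have cv: "wprod G h v \<in> carrier G" "wprod G h t \<in> carrier G" "h x \<in> carrier G"
      using vS hS xS by (blast intro: wprod_closed)+
    have w''p: "wprod G h w'' = wprod G h v \<otimes> wprod G h t"
      unfolding w''_def using sub hS w''_def by (blast intro: wprod_append)
    have "wprod G h w = (if b then h x else inv (h x)) \<otimes>
        (wprod G h v \<otimes> ((if b then inv (h x) else h x) \<otimes> wprod G h t))"
    proof -
      have "wprod G h (v @ (x', \<not> b) # t) = wprod G h v \<otimes> wprod G h ((x', \<not> b) # t)"
      proof (rule wprod_append)
        fix y assume "y \<in> set (map fst (v @ (x', \<not> b) # t))"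
        then have "y \<in> S" using vS xS by auto
        then show "h y \<in> carrier G" by (rule hS)
      qed
      then show ?thesis unfolding wdef using hx by simp
    qed
    also have "\<dots> = wprod G h w''"
      using cv w''p by (cases b) (simp_all add: cancel_aux)
    finally show ?thesis using IH by simp
  qed
qed


lemma cls_cons:
  assumes c: "closed_op Z op" and w: "(x, b) # w \<in> words Z"
  shows "wrel Z op `` {(x, b) # w} =
    wrel Z op `` {[(x, b)]} \<otimes>\<^bsub>structure_group Z op\<^esub> wrel Z op `` {w}"
proof -
  have "[(x, b)] \<in> words Z" "w \<in> words Z" using w by (auto simp: words_def)
  then show ?thesis using sg_mult[OF c, of "[(x, b)]" w] by simp
qed

lemma cls_carrier: "w \<in> words Z \<Longrightarrow> wrel Z op `` {w} \<in> carrier (structure_group Z op)"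
  by (simp add: sg_carrier quotientI)

lemma cls_false:
  assumes c: "closed_op Z op" and x: "x \<in> Z"
  shows "wrel Z op `` {[(x, False)]} = inv\<^bsub>structure_group Z op\<^esub> (wrel Z op `` {[(x, True)]})"
proof -
  interpret G: group "structure_group Z op" by (rule sg_group[OF c])
  have w: "[(x, False)] \<in> words Z" "[(x, True)] \<in> words Z" using x by (auto simp: words_def)
  have "([] @ [(x, False), (x, \<not> False)] @ [], [] @ []) \<in> wrel Z op"
    using x by (intro wrel.wrel_cancel) auto
  then have "wrel Z op `` {[(x, False), (x, True)]} = wrel Z op `` {[]}"
    by (intro class_eqI) simp
  then have "wrel Z op `` {[(x, False)]} \<otimes>\<^bsub>structure_group Z op\<^esub> wrel Z op `` {[(x, True)]}
      = \<one>\<^bsub>structure_group Z op\<^esub>"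
    using sg_mult[OF c w] by (simp add: sg_one)
  then show ?thesis
    by (intro G.inv_equality[symmetric]) (auto intro: cls_carrier w)
qed

lemma hom_wprod:
  assumes c: "closed_op Z op" and K: "group K"
    and phi: "\<phi> \<in> hom (structure_group Z op) K"
  shows "w \<in> words Z \<Longrightarrow> \<phi> (wrel Z op `` {w}) = wprod K (\<lambda>x. \<phi> (wrel Z op `` {[(x, True)]})) w"
proof (induction w)
  case Nil
  interpret H: group_hom "structure_group Z op" K \<phi>
    using sg_group[OF c] K phi by (simp add: group_hom_def group_hom_axioms_def)
  show ?case using H.hom_one by (simp add: sg_one)
next
  case (Cons a w)
  interpret H: group_hom "structure_group Z op" K \<phi>
    using sg_group[OF c] K phi by (simp add: group_hom_def group_hom_axioms_def)
  obtain x b where a: "a = (x, b)" by (cases a)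
  have w: "w \<in> words Z" "x \<in> Z" "[(x, True)] \<in> words Z" "[(x, b)] \<in> words Z"
    using Cons.prems a by (auto simp: words_def)
  have "\<phi> (wrel Z op `` {a # w}) = \<phi> (wrel Z op `` {[(x, b)]}) \<otimes>\<^bsub>K\<^esub> \<phi> (wrel Z op `` {w})"
    using cls_cons[OF c, of x b w] Cons.prems a w by (simp add: cls_carrier)
  moreover have "\<phi> (wrel Z op `` {[(x, b)]}) =
      (if b then \<phi> (wrel Z op `` {[(x, True)]}) else inv\<^bsub>K\<^esub> (\<phi> (wrel Z op `` {[(x, True)]})))"
    using cls_false[OF c w(2)] w by (cases b) (auto simp: cls_carrier)
  ultimately show ?case using Cons.IH[OF w(1)] a by simp
qed

lemma conn_hom:
  assumes c: "closed_op Z op" and K: "comm_group K"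
    and phi: "\<phi> \<in> hom (structure_group Z op) K"
  shows "(p, p') \<in> conn Z op \<Longrightarrow> \<phi> (wrel Z op `` {[(p, True)]}) = \<phi> (wrel Z op `` {[(p', True)]})"
proof (induction rule: conn.induct)
  case (conn_refl x)
  then show ?case by simp
next
  case (conn_step x y)
  interpret K: comm_group K by (rule K)
  interpret H: group_hom "structure_group Z op" K \<phi>
    using sg_group[OF c] K.group_axioms phi by (simp add: group_hom_def group_hom_axioms_def)
  have "([] @ [(y, False), (x, True), (y, True)] @ [], [] @ [(op x y, True)] @ []) \<in> wrel Z op"
    using conn_step by (intro wrel.wrel_rack) auto
  then have e: "wrel Z op `` {[(op x y, True)]} = wrel Z op `` {[(y, False), (x, True), (y, True)]}"
    by (intro class_eqI) (auto intro: wrel.wrel_sym)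
  have ws: "[(y, False), (x, True), (y, True)] \<in> words Z" using conn_step by (auto simp: words_def)
  have cx: "\<phi> (wrel Z op `` {[(x, True)]}) \<in> carrier K" "\<phi> (wrel Z op `` {[(y, True)]}) \<in> carrier K"
    using conn_step by (auto intro!: H.hom_closed cls_carrier simp: words_def)
  show ?case unfolding e hom_wprod[OF c K.group_axioms phi ws]
    using cx K.cancel_aux(2)[OF cx(2) cx(1) K.one_closed] by simp
next
  case (conn_sym x y)
  then show ?case by simp
next
  case (conn_trans x y z)
  then show ?case by simp
qed


lemma conn_class:
  assumes ab: "(a, b) \<in> conn X opr"
  shows "conn X opr `` {a} = conn X opr `` {b}"
proof
  show "conn X opr `` {a} \<subseteq> conn X opr `` {b}"
  proof
    fix z assume "z \<in> conn X opr `` {a}"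
    then have "(a, z) \<in> conn X opr" by simp
    then have "(b, z) \<in> conn X opr" by (rule conn.conn_trans[OF conn.conn_sym[OF ab]])
    then show "z \<in> conn X opr `` {b}" by simp
  qed
  show "conn X opr `` {b} \<subseteq> conn X opr `` {a}"
  proof
    fix z assume "z \<in> conn X opr `` {b}"
    then have "(b, z) \<in> conn X opr" by simp
    then have "(a, z) \<in> conn X opr" by (rule conn.conn_trans[OF ab])
    then show "z \<in> conn X opr `` {a}" by simp
  qed
qed

lemma conn_fst:
  "(p, p') \<in> conn (X \<times> Y) (prod_op opX opY) \<Longrightarrow> (fst p, fst p') \<in> conn X opX"
proof (induction rule: conn.induct)
  case (conn_refl x)
  then show ?case by (intro conn.conn_refl) auto
next
  case (conn_step x y)
  then have "(fst x, opX (fst x) (fst y)) \<in> conn X opX" by (intro conn.conn_step) auto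
  then show ?case by (simp add: prod_op_def)
next
  case (conn_sym x y)
  show ?case by (rule conn.conn_sym[OF conn_sym.IH])
next
  case (conn_trans x y z)
  show ?case by (rule conn.conn_trans[OF conn_trans.IH])
qed

lemma conn_snd:
  "(p, p') \<in> conn (X \<times> Y) (prod_op opX opY) \<Longrightarrow> (snd p, snd p') \<in> conn Y opY"
proof (induction rule: conn.induct)
  case (conn_refl x)
  then show ?case by (intro conn.conn_refl) auto
next
  case (conn_step x y)
  then have "(snd x, opY (snd x) (snd y)) \<in> conn Y opY" by (intro conn.conn_step) auto
  then show ?case by (simp add: prod_op_def)
next
  case (conn_sym x y)
  show ?case by (rule conn.conn_sym[OF conn_sym.IH])
next
  case (conn_trans x y z)
  show ?case by (rule conn.conn_trans[OF conn_trans.IH])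
qed

lemma triv_prod_map_component:
  assumes p: "p \<in> X \<times> Y"
  shows "triv_prod_map X opX Y opY (component (X \<times> Y) (prod_op opX opY) p) =
    (component X opX (fst p), component Y opY (snd p))"
proof -
  let ?g = "\<lambda>p. (component X opX (fst p), component Y opY (snd p))"
  have "?g ` (conn (X \<times> Y) (prod_op opX opY) `` {p}) = {?g p}"
  proof
    show "?g ` (conn (X \<times> Y) (prod_op opX opY) `` {p}) \<subseteq> {?g p}"
    proof
      fix z assume "z \<in> ?g ` (conn (X \<times> Y) (prod_op opX opY) `` {p})"
      then obtain p' where p': "(p, p') \<in> conn (X \<times> Y) (prod_op opX opY)" "z = ?g p'" by auto
      have e1: "component X opX (fst p') = component X opX (fst p)"
        unfolding component_def by (rule conn_class[OF conn_fst[OF p'(1)], symmetric])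
      have e2: "component Y opY (snd p') = component Y opY (snd p)"
        unfolding component_def by (rule conn_class[OF conn_snd[OF p'(1)], symmetric])
      show "z \<in> {?g p}" using p'(2) e1 e2 by simp
    qed
    show "{?g p} \<subseteq> ?g ` (conn (X \<times> Y) (prod_op opX opY) `` {p})"
    proof -
      have "p \<in> conn (X \<times> Y) (prod_op opX opY) `` {p}" using p by (simp add: conn.conn_refl)
      then show ?thesis by blast
    qed
  qed
  then show ?thesis by (simp add: triv_prod_map_def component_def)
qed

lemma sync_conn:
  assumes s: "synchronized X opX Y opY" and p: "p \<in> X \<times> Y" "p' \<in> X \<times> Y"
    and eq: "(component X opX (fst p), component Y opY (snd p)) =
             (component X opX (fst p'), component Y opY (snd p'))"
  shows "(p, p') \<in> conn (X \<times> Y) (prod_op opX opY)"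
proof -
  let ?C = "component (X \<times> Y) (prod_op opX opY)"
  have inj: "inj_on (triv_prod_map X opX Y opY) (triv_set (X \<times> Y) (prod_op opX opY))"
    using s by (simp add: synchronized_def bij_betw_def)
  have m: "?C p \<in> triv_set (X \<times> Y) (prod_op opX opY)" "?C p' \<in> triv_set (X \<times> Y) (prod_op opX opY)"
    using p by (auto simp: triv_set_def component_def intro: quotientI)
  have "?C p = ?C p'"
    using inj_onD[OF inj _ m] triv_prod_map_component[OF p(1)] triv_prod_map_component[OF p(2)] eq
    by simp
  moreover have "p' \<in> ?C p'" using p(2) by (simp add: component_def conn.conn_refl)
  ultimately have "p' \<in> ?C p" by simp
  then show ?thesis by (simp add: component_def)
qed

lemma esum_triv:
  "(u, v) \<in> wrel T triv_op \<Longrightarrow> esum (\<lambda>z. z) c u = esum (\<lambda>z. z) c v"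
  by (induction rule: wrel.induct) (auto simp: esum_append triv_op_def)

lemma esum_map:
  "esum (\<lambda>z. z) c (map (\<lambda>(x, b). (g x, b)) w) = esum g c w"
proof (induction w)
  case Nil
  then show ?case by simp
next
  case (Cons a w)
  then show ?case by (cases a) auto
qed

lemma rack_closed: "rack X opr \<Longrightarrow> closed_op X opr"
  by (simp add: rack_def closed_op_def)


theorem corollary4p29:
  fixes X :: "'a set" and opX :: "'a \<Rightarrow> 'a \<Rightarrow> 'a"
    and Y :: "'b set" and opY :: "'b \<Rightarrow> 'b \<Rightarrow> 'b"
  assumes "rack X opX" and "rack Y opY"
    and "productive X opX Y opY"
    and "synchronized X opX Y opY"
  shows "inj_on
           (\<lambda>A. (induced_hom X opX fst A,
                 induced_hom Y opY snd A,
                 induced_hom (triv_set X opX \<times> triv_set Y opY) triv_op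
                   (\<lambda>p. (component X opX (fst p), component Y opY (snd p))) A))
           (carrier (structure_group (X \<times> Y) (prod_op opX opY)))"
proof -
  let ?Z = "X \<times> Y"
  let ?op = "prod_op opX opY"
  let ?G = "structure_group ?Z ?op"
  let ?R = "wrel ?Z ?op"
  let ?T = "triv_set X opX \<times> triv_set Y opY"
  let ?g = "\<lambda>p. (component X opX (fst p), component Y opY (snd p))"
  let ?GX = "structure_group X opX"
  let ?GY = "structure_group Y opY"
  let ?GT = "structure_group ?T triv_op"
  let ?f1 = "induced_hom X opX fst"
  let ?f2 = "induced_hom Y opY snd"
  let ?f3 = "induced_hom ?T triv_op ?g"
  have cX: "closed_op X opX" by (rule rack_closed[OF assms(1)])
  have cY: "closed_op Y opY" by (rule rack_closed[OF assms(2)])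
  have cZ: "closed_op ?Z ?op" using cX cY by (auto simp: closed_op_def prod_op_def)
  have cT: "closed_op ?T triv_op" by (simp add: closed_op_def triv_op_def)
  interpret G: group ?G by (rule sg_group[OF cZ])
  have hom1: "?f1 \<in> hom ?G ?GX"
    by (rule induced_hom_hom[OF cZ cX]) (auto simp: prod_op_def)
  have hom2: "?f2 \<in> hom ?G ?GY"
    by (rule induced_hom_hom[OF cZ cY]) (auto simp: prod_op_def)
  have compX: "component X opX (opX a c) = component X opX a" if "a \<in> X" "c \<in> X" for a c
    unfolding component_def by (rule conn_class[OF conn.conn_step[OF that], symmetric])
  have compY: "component Y opY (opY a c) = component Y opY a" if "a \<in> Y" "c \<in> Y" for a c
    unfolding component_def by (rule conn_class[OF conn.conn_step[OF that], symmetric])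
  have hom3: "?f3 \<in> hom ?G ?GT"
  proof (rule induced_hom_hom[OF cZ cT])
    show "?g ` ?Z \<subseteq> ?T"
      by (auto simp: triv_set_def component_def intro: quotientI)
    fix x y assume "x \<in> ?Z" "y \<in> ?Z"
    then show "?g (?op x y) = triv_op (?g x) (?g y)"
      by (auto simp: prod_op_def triv_op_def compX compY)
  qed
  interpret H1: group_hom ?G ?GX ?f1
    using G.group_axioms sg_group[OF cX] hom1 by (simp add: group_hom_def group_hom_axioms_def)
  interpret H2: group_hom ?G ?GY ?f2
    using G.group_axioms sg_group[OF cY] hom2 by (simp add: group_hom_def group_hom_axioms_def)
  interpret H3: group_hom ?G ?GT ?f3
    using G.group_axioms sg_group[OF cT] hom3 by (simp add: group_hom_def group_hom_axioms_def)
  let ?D = "derived ?G (carrier ?G)"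
  let ?Q = "?G Mod ?D"
  interpret N: normal ?D ?G by (rule G.derived_self_is_normal)
  have Qc: "comm_group ?Q" by (rule G.derived_quot_is_comm_group)
  interpret Q: comm_group ?Q by (rule Qc)
  have pih: "(\<lambda>a. ?D #>\<^bsub>?G\<^esub> a) \<in> hom ?G ?Q" by (rule N.r_coset_hom_Mod)
  interpret P: group_hom ?G ?Q "\<lambda>a. ?D #>\<^bsub>?G\<^esub> a"
    using G.group_axioms Q.group_axioms pih by (simp add: group_hom_def group_hom_axioms_def)
  have prod: "inj_on (\<lambda>A. (?f1 A, ?f2 A)) ?D"
    using assms(3) by (simp add: productive_def Let_def)
  show ?thesis
  proof (rule inj_onI)
    fix A B
    assume A: "A \<in> carrier ?G" and B: "B \<in> carrier ?G"
      and eq: "(?f1 A, ?f2 A, ?f3 A) = (?f1 B, ?f2 B, ?f3 B)"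
    define C where "C = A \<otimes>\<^bsub>?G\<^esub> inv\<^bsub>?G\<^esub> B"
    have Cc: "C \<in> carrier ?G" using A B by (simp add: C_def)
    have C1: "?f1 C = \<one>\<^bsub>?GX\<^esub>" using A B eq by (simp add: C_def H1.hom_mult H1.hom_inv)
    have C2: "?f2 C = \<one>\<^bsub>?GY\<^esub>" using A B eq by (simp add: C_def H2.hom_mult H2.hom_inv)
    have C3: "?f3 C = \<one>\<^bsub>?GT\<^esub>" using A B eq by (simp add: C_def H3.hom_mult H3.hom_inv)
    obtain w where w: "w \<in> words ?Z" "C = ?R `` {w}"
      using Cc by (auto simp: sg_carrier elim!: quotientE)
    have mw: "map (\<lambda>(x, b). (?g x, b)) w \<in> words ?T"
      using w(1) by (rule map_words) (auto simp: triv_set_def component_def intro: quotientI)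
    have "?f3 C = wrel ?T triv_op `` {map (\<lambda>(x, b). (?g x, b)) w}"
      unfolding w(2)
    proof (rule induced_hom_class[OF w(1)])
      show "?g ` ?Z \<subseteq> ?T"
        by (auto simp: triv_set_def component_def intro: quotientI)
      fix x y assume "x \<in> ?Z" "y \<in> ?Z"
      then show "?g (?op x y) = triv_op (?g x) (?g y)"
        by (auto simp: prod_op_def triv_op_def compX compY)
    qed
    then have "wrel ?T triv_op `` {map (\<lambda>(x, b). (?g x, b)) w} = wrel ?T triv_op `` {[]}"
      using C3 by (simp add: sg_one)
    then have rel: "(map (\<lambda>(x, b). (?g x, b)) w, []) \<in> wrel ?T triv_op"
      using class_eq_iff[OF cT mw, of "[]"] by (simp add: words_def)
    have es: "\<forall>c. esum ?g c w = 0"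
    proof
      fix c
      have "esum (\<lambda>z. z) c (map (\<lambda>(x, b). (?g x, b)) w) = esum (\<lambda>z. z) c []"
        by (rule esum_triv[OF rel])
      then show "esum ?g c w = 0" by (simp add: esum_map)
    qed
    let ?h = "\<lambda>x. ?D #>\<^bsub>?G\<^esub> (?R `` {[(x, True)]})"
    have hc: "\<forall>x\<in>?Z. ?h x \<in> carrier ?Q"
      by (auto intro!: P.hom_closed cls_carrier simp: words_def)
    have hf: "\<forall>x\<in>?Z. \<forall>x'\<in>?Z. ?g x = ?g x' \<longrightarrow> ?h x = ?h x'"
    proof (intro ballI impI)
      fix x x' assume xx: "x \<in> ?Z" "x' \<in> ?Z" "?g x = ?g x'"
      have "(x, x') \<in> conn ?Z ?op" by (rule sync_conn[OF assms(4) xx])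
      then show "?h x = ?h x'" by (rule conn_hom[OF cZ Qc pih])
    qed
    have sub: "set (map fst w) \<subseteq> ?Z" using w(1) by (simp add: words_def)
    have "wprod ?Q ?h w = \<one>\<^bsub>?Q\<^esub>"
      by (rule Q.wprod_zero[OF hc hf sub es])
    moreover have "?D #>\<^bsub>?G\<^esub> C = wprod ?Q ?h w"
      unfolding w(2) by (rule hom_wprod[OF cZ Q.group_axioms pih w(1)])
    ultimately have "?D #>\<^bsub>?G\<^esub> C = ?D" by (simp add: FactGroup_def)
    then have CD: "C \<in> ?D"
      by (rule G.coset_join1[OF _ Cc G.derived_is_subgroup[OF subset_refl]])
    have oneD: "\<one>\<^bsub>?G\<^esub> \<in> ?D"
      by (rule subgroup.one_closed[OF G.derived_is_subgroup[OF subset_refl]])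
    have "(?f1 C, ?f2 C) = (?f1 \<one>\<^bsub>?G\<^esub>, ?f2 \<one>\<^bsub>?G\<^esub>)"
      using C1 C2 by simp
    then have "C = \<one>\<^bsub>?G\<^esub>" using inj_onD[OF prod _ CD oneD] by simp
    then have "inv\<^bsub>?G\<^esub> (inv\<^bsub>?G\<^esub> B) = A"
      using A B by (intro G.inv_equality) (simp_all add: C_def)
    then show "A = B" using B by simp
  qed
qed

end
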